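(* Let $M=G/H$ be a compact homogeneous space with $\mathrm{rk}(H)=\mathrm{rk}(G)$ (equivalently $\chi(M)\neq 0$) and faithful infinitesimal isotropy representation, and let $(G/H,g,\rho,\varphi)$ be a homogeneous almost quaternion-Hermitian structure. Then the infinitesimal representation $\rho_*:\mathfrak{h}\to\mathfrak{so}(3)$ does not vanish.
   Context: Here $G,H$ are compact, $\mathfrak{g},\mathfrak{h}$ their Lie algebras, $\mathfrak{m}$ the orthogonal complement of $\mathfrak{h}$ in $\mathfrak{g}$ with respect to an $\mathrm{ad}_{\mathfrak{g}}$-invariant scalar product, whose restriction to $\mathfrak{m}$ defines the homogeneous metric $g$; $\iota:H\to\mathrm{SO}(\mathfrak{m})$ is the isotropy representation. A homogeneous almost quaternion-Hermitian structure on $(G/H,g)$ consists of an orthogonal representation $\rho:H\to\mathrm{SO}(3)$ and an $H$-equivariant Lie algebra morphism $\varphi:\mathfrak{so}(3)\to\mathrm{End}^-(\mathfrak{m})$ extending to an algebra representation of the even real Clifford algebra $\mathrm{Cl}^0_3\cong\mathbb{H}$ on $\mathfrak{m}$; $H$ acts on $\mathfrak{so}(3)$ via $\mathrm{Ad}\circ\rho$ and on $\mathrm{End}^-(\mathfrak{m})$ by conjugation via $\iota$. *)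

theory Defs
  imports "HOL-Analysis.Analysis"
begin

text \<open>Matrix Lie algebras: a Lie algebra is modelled as a linear subspace of real
  square matrices closed under the commutator bracket.\<close>

definition lie_bracket :: "real^'n^'n \<Rightarrow> real^'n^'n \<Rightarrow> real^'n^'n" where
  "lie_bracket X Y = X ** Y - Y ** X"

definition skew_matrices :: "(real^'n^'n) set" where
  "skew_matrices = {X. transpose X = - X}"

abbreviation so3 :: "(real^3^3) set" where
  "so3 \<equiv> skew_matrices"

definition lie_subalgebra :: "(real^'n^'n) set \<Rightarrow> bool" where
  "lie_subalgebra L \<longleftrightarrow> subspace L \<and> (\<forall>X\<in>L. \<forall>Y\<in>L. lie_bracket X Y \<in> L)"

definition compact_lie_algebra :: "(real^'n^'n) set \<Rightarrow> bool" where
  "compact_lie_algebra L \<longleftrightarrow> lie_subalgebra L \<and> L \<subseteq> skew_matrices"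

text \<open>Rank of a compact Lie algebra = dimension of a maximal torus
  = maximal dimension of an abelian subalgebra.\<close>
definition lie_rank :: "(real^'n^'n) set \<Rightarrow> nat" where
  "lie_rank L = Max {dim A | A. subspace A \<and> A \<subseteq> L \<and>
                       (\<forall>X\<in>A. \<forall>Y\<in>A. lie_bracket X Y = 0)}"

definition ad_invariant_scalar_product ::
  "(real^'n^'n) set \<Rightarrow> (real^'n^'n \<Rightarrow> real^'n^'n \<Rightarrow> real) \<Rightarrow> bool" where
  "ad_invariant_scalar_product L B \<longleftrightarrow>
     (\<forall>X\<in>L. \<forall>Y\<in>L. B X Y = B Y X) \<and>
     (\<forall>X\<in>L. \<forall>Y\<in>L. \<forall>Z\<in>L. \<forall>a b. B (a *\<^sub>R X + b *\<^sub>R Y) Z = a * B X Z + b * B Y Z) \<and>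
     (\<forall>X\<in>L. X \<noteq> 0 \<longrightarrow> B X X > 0) \<and>
     (\<forall>X\<in>L. \<forall>Y\<in>L. \<forall>Z\<in>L. B (lie_bracket Z X) Y + B X (lie_bracket Z Y) = 0)"

definition orth_compl ::
  "(real^'n^'n) set \<Rightarrow> (real^'n^'n) set \<Rightarrow> (real^'n^'n \<Rightarrow> real^'n^'n \<Rightarrow> real) \<Rightarrow> (real^'n^'n) set" where
  "orth_compl g h B = {X\<in>g. \<forall>Y\<in>h. B X Y = 0}"

text \<open>Endomorphisms of m (only their values on m matter).\<close>
definition endo_on :: "'a::real_vector set \<Rightarrow> ('a \<Rightarrow> 'a) \<Rightarrow> bool" where
  "endo_on V A \<longleftrightarrow> (\<forall>x\<in>V. A x \<in> V) \<and>
     (\<forall>x\<in>V. \<forall>y\<in>V. \<forall>a b. A (a *\<^sub>R x + b *\<^sub>R y) = a *\<^sub>R A x + b *\<^sub>R A y)"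

definition skew_endo_on ::
  "'a::real_vector set \<Rightarrow> ('a \<Rightarrow> 'a \<Rightarrow> real) \<Rightarrow> ('a \<Rightarrow> 'a) \<Rightarrow> bool" where
  "skew_endo_on V B A \<longleftrightarrow> endo_on V A \<and> (\<forall>x\<in>V. \<forall>y\<in>V. B (A x) y = - B x (A y))"

definition faithful_isotropy ::
  "(real^'n^'n) set \<Rightarrow> (real^'n^'n) set \<Rightarrow> bool" where
  "faithful_isotropy h m \<longleftrightarrow> (\<forall>Y\<in>h. (\<forall>X\<in>m. lie_bracket Y X = 0) \<longrightarrow> Y = 0)"

definition lie_hom_into_so3 :: "(real^'n^'n) set \<Rightarrow> (real^'n^'n \<Rightarrow> real^3^3) \<Rightarrow> bool" where
  "lie_hom_into_so3 h r \<longleftrightarrow>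
     (\<forall>Y\<in>h. r Y \<in> so3) \<and>
     (\<forall>X\<in>h. \<forall>Y\<in>h. \<forall>a b. r (a *\<^sub>R X + b *\<^sub>R Y) = a *\<^sub>R r X + b *\<^sub>R r Y) \<and>
     (\<forall>X\<in>h. \<forall>Y\<in>h. r (lie_bracket X Y) = lie_bracket (r X) (r Y))"

text \<open>Axial vector of a skew 3x3 matrix X, i.e. X w = axial X \<times> w; this is the
  standard identification so(3) = R^3 with the cross product.\<close>
definition axial :: "real^3^3 \<Rightarrow> real^3" where
  "axial X = vector [X $ 3 $ 2, X $ 1 $ 3, X $ 2 $ 1]"

definition lie_hom_so3_skew_endo ::
  "'a::real_vector set \<Rightarrow> ('a \<Rightarrow> 'a \<Rightarrow> real) \<Rightarrow> (real^3^3 \<Rightarrow> 'a \<Rightarrow> 'a) \<Rightarrow> bool" where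
  "lie_hom_so3_skew_endo V B p \<longleftrightarrow>
     (\<forall>X\<in>so3. skew_endo_on V B (p X)) \<and>
     (\<forall>X\<in>so3. \<forall>Y\<in>so3. \<forall>a b. \<forall>x\<in>V. p (a *\<^sub>R X + b *\<^sub>R Y) x = a *\<^sub>R p X x + b *\<^sub>R p Y x) \<and>
     (\<forall>X\<in>so3. \<forall>Y\<in>so3. \<forall>x\<in>V. p (lie_bracket X Y) x = p X (p Y x) - p Y (p X x))"

text \<open>phi extends to an algebra representation of Cl^0_3 = H (quaternions with
  Hamilton's presentation i^2 = j^2 = k^2 = ijk = -1), where so(3) embeds into Cl^0_3
  as the imaginary quaternions via X \<mapsto> (1/2)(v1 i + v2 j + v3 k), v = axial X
  (i.e. e_a \<wedge> e_b \<mapsto> (1/2) e_a e_b).  An algebra representation of H on V is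
  given by the images I, J, K of i, j, k (with 1 \<mapsto> id).\<close>
definition extends_to_Cl03_rep ::
  "'a::real_vector set \<Rightarrow> (real^3^3 \<Rightarrow> 'a \<Rightarrow> 'a) \<Rightarrow> bool" where
  "extends_to_Cl03_rep V p \<longleftrightarrow>
     (\<exists>I J K. endo_on V I \<and> endo_on V J \<and> endo_on V K \<and>
        (\<forall>x\<in>V. I (I x) = - x \<and> J (J x) = - x \<and> K (K x) = - x \<and> I (J (K x)) = - x) \<and>
        (\<forall>X\<in>so3. \<forall>x\<in>V. p X x =
            (1/2) *\<^sub>R ((axial X $ 1) *\<^sub>R I x + (axial X $ 2) *\<^sub>R J x + (axial X $ 3) *\<^sub>R K x)))"

text \<open>H-equivariance of phi, infinitesimally: for Y in h, the derivative of the
  H-action Ad o rho on so(3) is ad(rho_* Y); the derivative of conjugation via the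
  isotropy representation on End(m) is the commutator with ad(Y)|_m.\<close>
definition equivariant_inf ::
  "(real^'n^'n) set \<Rightarrow> (real^'n^'n) set \<Rightarrow> (real^'n^'n \<Rightarrow> real^3^3)
     \<Rightarrow> (real^3^3 \<Rightarrow> real^'n^'n \<Rightarrow> real^'n^'n) \<Rightarrow> bool" where
  "equivariant_inf h m r p \<longleftrightarrow>
     (\<forall>Y\<in>h. \<forall>X\<in>so3. \<forall>x\<in>m.
        p (lie_bracket (r Y) X) x = lie_bracket Y (p X x) - p X (lie_bracket Y x))"

end

theory Submission
  imports Defs
begin


lemma mm_scale_l: "((c::real) *\<^sub>R A) ** (B::real^'n^'n) = c *\<^sub>R (A ** B)"
  by (vector matrix_matrix_mult_def sum_distrib_left mult.assoc)
lemma mm_scale_r: "(A::real^'n^'n) ** (c *\<^sub>R B) = c *\<^sub>R (A ** B)"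
  by (vector matrix_matrix_mult_def sum_distrib_left mult.left_commute)
lemma mm_add_r: "(A::real^'n^'n) ** (B + C) = A ** B + A ** C"
  by (rule matrix_add_ldistrib)
lemma mm_add_l: "((A::real^'n^'n) + B) ** C = A ** C + B ** C"
  by (vector matrix_matrix_mult_def sum.distrib[symmetric] field_simps)

lemma mm_diff_r: "(A::real^'n^'n) ** (B - C) = A ** B - A ** C"
  by (vector matrix_matrix_mult_def sum_subtractf[symmetric] field_simps)
lemma mm_diff_l: "((A::real^'n^'n) - B) ** C = A ** C - B ** C"
  by (vector matrix_matrix_mult_def sum_subtractf[symmetric] field_simps)

lemma br_add_r: "lie_bracket X (Y+Z) = lie_bracket X Y + lie_bracket X Z"
  by (simp add: lie_bracket_def mm_add_r mm_add_l)
lemma br_add_l: "lie_bracket (X+Y) Z = lie_bracket X Z + lie_bracket Y Z"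
  by (simp add: lie_bracket_def mm_add_r mm_add_l)
lemma br_scale_l: "lie_bracket (c *\<^sub>R X) Y = c *\<^sub>R lie_bracket X Y"
  by (simp add: lie_bracket_def mm_scale_l mm_scale_r scaleR_diff_right)
lemma br_scale_r: "lie_bracket X (c *\<^sub>R Y) = c *\<^sub>R lie_bracket X Y"
  by (simp add: lie_bracket_def mm_scale_l mm_scale_r scaleR_diff_right)
lemma br_anti: "lie_bracket X Y = - lie_bracket Y X"
  by (simp add: lie_bracket_def)
lemma br_self[simp]: "lie_bracket X X = 0"
  by (simp add: lie_bracket_def)
lemma br_neg_r: "lie_bracket X (- Y) = - lie_bracket X Y"
  using br_scale_r[of X "-1" Y] by simp
lemma br_neg_l: "lie_bracket (- X) Y = - lie_bracket X Y"
  using br_scale_l[of "-1" X Y] by simp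
lemma br_diff_r: "lie_bracket X (Y - Z) = lie_bracket X Y - lie_bracket X Z"
  using br_add_r[of X Y "-Z"] br_neg_r by simp
lemma br_diff_l: "lie_bracket (X - Y) Z = lie_bracket X Z - lie_bracket Y Z"
  using br_add_l[of X "-Y" Z] br_neg_l by simp
lemma br_zero_r[simp]: "lie_bracket X 0 = 0"
  by (simp add: lie_bracket_def)
lemma br_zero_l[simp]: "lie_bracket 0 X = 0"
  by (simp add: lie_bracket_def)
lemma jacobi: "lie_bracket Z (lie_bracket X Y) = lie_bracket (lie_bracket Z X) Y + lie_bracket X (lie_bracket Z Y)"
  by (simp add: lie_bracket_def mm_diff_r mm_diff_l matrix_mul_assoc algebra_simps)

lemma inner_mat: "(X::real^'n^'n) \<bullet> Y = (\<Sum>i\<in>UNIV. \<Sum>j\<in>UNIV. X$i$j * Y$i$j)"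
  by (simp add: inner_vec_def)

lemma mm_neg_l: "(- (A::real^'n^'n)) ** (B::real^'n^'n) = - (A ** B)"
  using mm_scale_l[of "-1" A B] by simp
lemma mm_neg_r: "(A::real^'n^'n) ** (- (B::real^'n^'n)) = - (A ** B)"
  using mm_scale_r[of A "-1" B] by simp

lemma frob_left: fixes X Y Z :: "real^'n^'n" assumes "transpose Y = - Y"
  shows "(Y ** X) \<bullet> Z = - (X \<bullet> (Y ** Z))"
proof -
  have e: "Y ** Z = - (transpose Y ** Z)" using assms by (simp add: mm_neg_l)
  have "(Y ** X) \<bullet> Z = (\<Sum>i\<in>UNIV. \<Sum>j\<in>UNIV. \<Sum>k\<in>UNIV. Y$i$k * X$k$j * Z$i$j)"
    by (simp add: inner_mat matrix_matrix_mult_def sum_distrib_right)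
  also have "... = (\<Sum>i\<in>UNIV. \<Sum>k\<in>UNIV. \<Sum>j\<in>UNIV. Y$i$k * X$k$j * Z$i$j)"
    by (rule sum.cong[OF refl], rule sum.swap)
  also have "... = (\<Sum>k\<in>UNIV. \<Sum>i\<in>UNIV. \<Sum>j\<in>UNIV. Y$i$k * X$k$j * Z$i$j)"
    by (rule sum.swap)
  also have "... = (\<Sum>k\<in>UNIV. \<Sum>j\<in>UNIV. \<Sum>i\<in>UNIV. Y$i$k * X$k$j * Z$i$j)"
    by (rule sum.cong[OF refl], rule sum.swap)
  also have "... = X \<bullet> (transpose Y ** Z)"
    by (simp add: inner_mat matrix_matrix_mult_def sum_distrib_left transpose_def mult.commute mult.left_commute)
  also have "... = - (X \<bullet> (Y ** Z))" by (simp add: e)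
  finally show ?thesis .
qed

lemma frob_right: fixes X Y Z :: "real^'n^'n" assumes "transpose Y = - Y"
  shows "(X ** Y) \<bullet> Z = - (X \<bullet> (Z ** Y))"
proof -
  have e: "Z ** Y = - (Z ** transpose Y)" using assms by (simp add: mm_neg_r)
  have "(X ** Y) \<bullet> Z = (\<Sum>i\<in>UNIV. \<Sum>j\<in>UNIV. \<Sum>k\<in>UNIV. X$i$k * Y$k$j * Z$i$j)"
    by (simp add: inner_mat matrix_matrix_mult_def sum_distrib_right)
  also have "... = (\<Sum>i\<in>UNIV. \<Sum>k\<in>UNIV. \<Sum>j\<in>UNIV. X$i$k * Y$k$j * Z$i$j)"
    by (rule sum.cong[OF refl], rule sum.swap)
  also have "... = X \<bullet> (Z ** transpose Y)"
    by (simp add: inner_mat matrix_matrix_mult_def sum_distrib_left transpose_def mult.commute mult.left_commute)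
  also have "... = - (X \<bullet> (Z ** Y))" by (simp add: e)
  finally show ?thesis .
qed

lemma frob_skew: fixes X Y Z :: "real^'n^'n" assumes "transpose Y = - Y"
  shows "lie_bracket Y X \<bullet> Z = - (X \<bullet> lie_bracket Y Z)"
  using frob_left[OF assms, of X Z] frob_right[OF assms, of X Z]
  unfolding lie_bracket_def inner_diff_left inner_diff_right by linarith




lemma sym_eigen:
  fixes A :: "'a::euclidean_space \<Rightarrow> 'a"
  assumes lin: "linear A" and sym: "\<And>u w. A u \<bullet> w = u \<bullet> A w"
    and V: "subspace V" "V \<noteq> {0}" and inv: "\<And>u. u \<in> V \<Longrightarrow> A u \<in> V"
  shows "\<exists>v\<in>V. v \<noteq> 0 \<and> (\<exists>l. A v = l *\<^sub>R v)"
proof -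
  define K where "K = V \<inter> sphere 0 1"
  have "compact K" unfolding K_def
    using closed_subspace[OF V(1)] compact_sphere by (simp add: closed_Int_compact)
  obtain x where x: "x \<in> V" "x \<noteq> 0" using V subspace_0 by blast
  have "(1/norm x) *\<^sub>R x \<in> K" unfolding K_def using x V(1)
    by (simp add: subspace_scale)
  hence "K \<noteq> {}" by blast
  have bl: "bounded_linear A" using lin by (simp add: linear_conv_bounded_linear)
  have "continuous_on K (\<lambda>u. u \<bullet> A u)"
    by (intro continuous_intros linear_continuous_on bl)
  then obtain v where v: "v \<in> K" and vmax: "\<And>y. y \<in> K \<Longrightarrow> y \<bullet> A y \<le> v \<bullet> A v"
    using continuous_attains_sup[OF \<open>compact K\<close> \<open>K \<noteq> {}\<close>] by blast
  define l where "l = v \<bullet> A v"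
  have vV: "v \<in> V" and vn: "norm v = 1" using v by (auto simp: K_def)
  have vv: "v \<bullet> v = 1" using vn by (simp add: norm_eq_1)
  have ray: "u \<bullet> A u \<le> l * (u \<bullet> u)" if u: "u \<in> V" for u
  proof (cases "u = 0")
    case True then show ?thesis using linear_0[OF lin] by simp
  next
    case False
    define c where "c = 1 / norm u"
    have c: "c > 0" using False by (simp add: c_def)
    have "c *\<^sub>R u \<in> K" unfolding K_def c_def using u V(1) False by (simp add: subspace_scale)
    hence "(c *\<^sub>R u) \<bullet> A (c *\<^sub>R u) \<le> l" using vmax l_def by blast
    hence "c * c * (u \<bullet> A u) \<le> l" by (simp add: linear_scale[OF lin])
    moreover have "u \<bullet> u = norm u * norm u" by (simp add: power2_norm_eq_inner[symmetric] power2_eq_square)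
    moreover have "c * norm u = 1" using False by (simp add: c_def)
    ultimately have "c * c * (u \<bullet> A u) * (norm u * norm u) \<le> l * (u \<bullet> u)"
      by (simp add: mult_right_mono)
    moreover have "c * c * (u \<bullet> A u) * (norm u * norm u) = (c * norm u) * (c * norm u) * (u \<bullet> A u)"
      by (simp add: algebra_simps)
    ultimately show ?thesis using \<open>c * norm u = 1\<close> by simp
  qed
  define w where "w = l *\<^sub>R v - A v"
  have wV: "w \<in> V" unfolding w_def using vV inv V(1) by (simp add: subspace_diff subspace_scale)
  have "w = 0"
  proof (rule ccontr)
    assume "w \<noteq> 0"
    define W where "W = w \<bullet> w"
    have W: "W > 0" using \<open>w \<noteq> 0\<close> by (simp add: W_def)
    define C where "C = w \<bullet> A w - l * W"
    define s where "s = W / (\<bar>C\<bar> + 1)"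
    have s: "s > 0" using W by (simp add: s_def)
    have "v - s *\<^sub>R w \<in> V" using vV wV V(1) by (simp add: subspace_diff subspace_scale)
    from ray[OF this] have ineq: "(v - s *\<^sub>R w) \<bullet> A (v - s *\<^sub>R w) \<le> l * ((v - s *\<^sub>R w) \<bullet> (v - s *\<^sub>R w))" .
    have e1: "(v - s *\<^sub>R w) \<bullet> A (v - s *\<^sub>R w) = l - 2 * s * (w \<bullet> A v) + s * s * (w \<bullet> A w)"
    proof -
      have "v \<bullet> A w = w \<bullet> A v" using sym[of w v] by (simp add: inner_commute)
      thus ?thesis unfolding l_def
        by (simp add: linear_diff[OF lin] linear_scale[OF lin] inner_diff_left inner_diff_right inner_commute[of w v] algebra_simps)
    qed
    have e2: "(v - s *\<^sub>R w) \<bullet> (v - s *\<^sub>R w) = 1 - 2 * s * (v \<bullet> w) + s * s * W"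
      unfolding W_def using vv by (simp add: inner_diff_left inner_diff_right inner_commute[of w v] algebra_simps)
    have e3: "W = l * (v \<bullet> w) - w \<bullet> A v"
      unfolding W_def w_def using vv by (simp add: inner_diff_left inner_diff_right inner_commute l_def[symmetric] algebra_simps)
    have key: "2 * s * W + s * s * C \<le> 0"
      using ineq unfolding e1 e2 C_def e3 by (simp add: algebra_simps)
    have "s * \<bar>C\<bar> < W" using W unfolding s_def by (simp add: field_simps)
    hence "s * (s * \<bar>C\<bar>) \<le> s * W" using s by simp
    moreover have "- (s * (s * \<bar>C\<bar>)) \<le> s * s * C"
    proof -
      have "- \<bar>C\<bar> \<le> C" by simp
      hence "(s * s) * (- \<bar>C\<bar>) \<le> (s * s) * C" using s by (intro mult_left_mono) auto
      thus ?thesis by simp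
    qed
    ultimately have "2 * s * W + s * s * C \<ge> s * W" by linarith
    moreover have "s * W > 0" using s W by simp
    ultimately show False using key by linarith
  qed
  hence "A v = l *\<^sub>R v" unfolding w_def by simp
  moreover have "v \<noteq> 0" using vn by auto
  ultimately show ?thesis using vV by blast
qed




lemma br_linear: "linear (lie_bracket Y)"
  by (rule linearI) (simp_all add: br_add_r br_scale_r)

locale qs =
  fixes g t m :: "(real^'n^'n) set" and B :: "real^'n^'n \<Rightarrow> real^'n^'n \<Rightarrow> real"
    and I J K :: "real^'n^'n \<Rightarrow> real^'n^'n"
  assumes g_sub: "subspace g" and g_br: "\<And>X Y. X\<in>g \<Longrightarrow> Y\<in>g \<Longrightarrow> lie_bracket X Y \<in> g"
    and g_skew: "g \<subseteq> skew_matrices"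
    and B_sym: "\<And>X Y. X\<in>g \<Longrightarrow> Y\<in>g \<Longrightarrow> B X Y = B Y X"
    and B_lin: "\<And>X Y Z a b. X\<in>g \<Longrightarrow> Y\<in>g \<Longrightarrow> Z\<in>g \<Longrightarrow> B (a *\<^sub>R X + b *\<^sub>R Y) Z = a * B X Z + b * B Y Z"
    and B_pos: "\<And>X. X\<in>g \<Longrightarrow> X\<noteq>0 \<Longrightarrow> B X X > 0"
    and B_inv: "\<And>X Y Z. X\<in>g \<Longrightarrow> Y\<in>g \<Longrightarrow> Z\<in>g \<Longrightarrow> B (lie_bracket Z X) Y + B X (lie_bracket Z Y) = 0"
    and t_sub: "subspace t" and t_g: "t \<subseteq> g"
    and t_ab: "\<And>X Y. X\<in>t \<Longrightarrow> Y\<in>t \<Longrightarrow> lie_bracket X Y = 0"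
    and t_max: "\<And>X. X\<in>g \<Longrightarrow> (\<And>Y. Y\<in>t \<Longrightarrow> lie_bracket Y X = 0) \<Longrightarrow> X\<in>t"
    and m_sub: "subspace m" and m_g: "m \<subseteq> g" and m_nz: "m \<noteq> {0}"
    and m_perp: "\<And>X Y. X\<in>m \<Longrightarrow> Y\<in>t \<Longrightarrow> B X Y = 0"
    and t_m: "\<And>Y X. Y\<in>t \<Longrightarrow> X\<in>m \<Longrightarrow> lie_bracket Y X \<in> m"
    and I: "endo_on m I" and J: "endo_on m J" and K: "endo_on m K"
    and quat: "\<And>x. x\<in>m \<Longrightarrow> I (I x) = -x \<and> J (J x) = -x \<and> K (K x) = -x \<and> I (J (K x)) = -x"
    and Iskew: "\<And>x y. x\<in>m \<Longrightarrow> y\<in>m \<Longrightarrow> B (I x) y = - B x (I y)"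
    and Jskew: "\<And>x y. x\<in>m \<Longrightarrow> y\<in>m \<Longrightarrow> B (J x) y = - B x (J y)"
    and Kskew: "\<And>x y. x\<in>m \<Longrightarrow> y\<in>m \<Longrightarrow> B (K x) y = - B x (K y)"
    and Icomm: "\<And>Y x. Y\<in>t \<Longrightarrow> x\<in>m \<Longrightarrow> lie_bracket Y (I x) = I (lie_bracket Y x)"
    and Jcomm: "\<And>Y x. Y\<in>t \<Longrightarrow> x\<in>m \<Longrightarrow> lie_bracket Y (J x) = J (lie_bracket Y x)"
    and Kcomm: "\<And>Y x. Y\<in>t \<Longrightarrow> x\<in>m \<Longrightarrow> lie_bracket Y (K x) = K (lie_bracket Y x)"
begin

lemma endo_facts:
  assumes "endo_on m P"
  shows "\<And>x. x\<in>m \<Longrightarrow> P x \<in> m"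
    and "\<And>x y. x\<in>m \<Longrightarrow> y\<in>m \<Longrightarrow> P (x + y) = P x + P y"
    and "\<And>x c. x\<in>m \<Longrightarrow> P (c *\<^sub>R x) = c *\<^sub>R P x"
    and "\<And>x. x\<in>m \<Longrightarrow> P (- x) = - P x"
    and "\<And>x y. x\<in>m \<Longrightarrow> y\<in>m \<Longrightarrow> P (x - y) = P x - P y"
proof -
  have L: "\<And>x y a b. x\<in>m \<Longrightarrow> y\<in>m \<Longrightarrow> P (a *\<^sub>R x + b *\<^sub>R y) = a *\<^sub>R P x + b *\<^sub>R P y"
    using assms by (simp add: endo_on_def)
  show "\<And>x. x\<in>m \<Longrightarrow> P x \<in> m" using assms by (simp add: endo_on_def)
  show "\<And>x y. x\<in>m \<Longrightarrow> y\<in>m \<Longrightarrow> P (x + y) = P x + P y" using L[of _ _ 1 1] by simp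
  show sc: "\<And>x c. x\<in>m \<Longrightarrow> P (c *\<^sub>R x) = c *\<^sub>R P x" using L[of _ _ _ 0] by simp
  show "\<And>x. x\<in>m \<Longrightarrow> P (- x) = - P x" using sc[of _ "-1"] by simp
  show "\<And>x y. x\<in>m \<Longrightarrow> y\<in>m \<Longrightarrow> P (x - y) = P x - P y" using L[of _ _ 1 "-1"] by simp
qed

lemmas Im = endo_facts(1)[OF I] and Iadd = endo_facts(2)[OF I] and Isc = endo_facts(3)[OF I]
  and Ineg = endo_facts(4)[OF I] and Idiff = endo_facts(5)[OF I]
lemmas Jm = endo_facts(1)[OF J] and Jadd = endo_facts(2)[OF J] and Jsc = endo_facts(3)[OF J]
  and Jneg = endo_facts(4)[OF J] and Jdiff = endo_facts(5)[OF J]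
lemmas Km = endo_facts(1)[OF K] and Kadd = endo_facts(2)[OF K] and Ksc = endo_facts(3)[OF K]
  and Kneg = endo_facts(4)[OF K] and Kdiff = endo_facts(5)[OF K]

lemma II: "x\<in>m \<Longrightarrow> I (I x) = -x" and JJ: "x\<in>m \<Longrightarrow> J (J x) = -x" and KK: "x\<in>m \<Longrightarrow> K (K x) = -x"
  using quat by auto

lemma IJ: assumes x: "x\<in>m" shows "I (J x) = K x"
proof -
  have "I (J (K (K x))) = - K x" using quat[OF Km[OF x]] by auto
  thus ?thesis using KK[OF x] Jneg[OF x] Ineg[OF Jm[OF x]] by simp
qed

lemma IK: assumes x: "x\<in>m" shows "I (K x) = - J x"
  using IJ[OF x] II[OF Jm[OF x]] by metis

lemma JI: assumes x: "x\<in>m" shows "J (I x) = - K x"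
proof -
  have "K (K (I x)) = - I x" using KK[OF Im[OF x]] .
  moreover have "K (I x) = I (J (I x))" using IJ[OF Im[OF x]] by simp
  moreover have "K (I (J (I x))) = I (J (I (J (I x))))" using IJ[OF Im[OF Jm[OF Im[OF x]]]] by simp
  ultimately have e: "I (J (I (J (I x)))) = - I x" by simp
  have "I (I (J (I (J (I x))))) = I (- I x)" using e by simp
  hence "- J (I (J (I x))) = x" using II[OF Jm[OF Im[OF Jm[OF Im[OF x]]]]] Ineg[OF Im[OF x]] II[OF x] by simp
  hence "J (I (J (I x))) = - x" by (metis minus_minus)
  hence "J (J (I (J (I x)))) = J (- x)" by simp
  hence "- I (J (I x)) = - J x" using JJ[OF Im[OF Jm[OF Im[OF x]]]] Jneg[OF x] by simp
  hence "I (J (I x)) = J x" by simp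
  hence "I (I (J (I x))) = I (J x)" by simp
  thus ?thesis using II[OF Jm[OF Im[OF x]]] IJ[OF x] by (metis minus_minus)
qed

lemma KI: assumes x: "x\<in>m" shows "K (I x) = J x"
proof -
  have "K (I x) = I (J (I x))" using IJ[OF Im[OF x]] by simp
  also have "... = I (- K x)" using JI[OF x] by simp
  also have "... = J x" using Ineg[OF Km[OF x]] IK[OF x] by simp
  finally show ?thesis .
qed


lemma gm: "x\<in>m \<Longrightarrow> x\<in>g" using m_g by auto
lemma tg: "x\<in>t \<Longrightarrow> x\<in>g" using t_g by auto

lemma B_add_l: "X\<in>g \<Longrightarrow> Y\<in>g \<Longrightarrow> Z\<in>g \<Longrightarrow> B (X + Y) Z = B X Z + B Y Z"
  using B_lin[of X Y Z 1 1] by simp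
lemma B_scale_l: "X\<in>g \<Longrightarrow> Z\<in>g \<Longrightarrow> B (c *\<^sub>R X) Z = c * B X Z"
  using B_lin[of X X Z c 0] by simp
lemma B_neg_l: "X\<in>g \<Longrightarrow> Z\<in>g \<Longrightarrow> B (- X) Z = - B X Z"
  using B_scale_l[of X Z "-1"] by simp
lemma B_diff_l: "X\<in>g \<Longrightarrow> Y\<in>g \<Longrightarrow> Z\<in>g \<Longrightarrow> B (X - Y) Z = B X Z - B Y Z"
  using B_lin[of X Y Z 1 "-1"] by simp
lemma gadd: "X\<in>g \<Longrightarrow> Y\<in>g \<Longrightarrow> X + Y \<in> g" using g_sub by (simp add: subspace_add)
lemma gsc: "X\<in>g \<Longrightarrow> c *\<^sub>R X \<in> g" using g_sub by (simp add: subspace_scale)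
lemma gneg: "X\<in>g \<Longrightarrow> - X \<in> g" using g_sub by (simp add: subspace_neg)
lemma gdiff: "X\<in>g \<Longrightarrow> Y\<in>g \<Longrightarrow> X - Y \<in> g" using g_sub by (simp add: subspace_diff)
lemma B_add_r: "X\<in>g \<Longrightarrow> Y\<in>g \<Longrightarrow> Z\<in>g \<Longrightarrow> B Z (X + Y) = B Z X + B Z Y"
  using B_add_l B_sym gadd by metis
lemma B_scale_r: "X\<in>g \<Longrightarrow> Z\<in>g \<Longrightarrow> B Z (c *\<^sub>R X) = c * B Z X"
  using B_scale_l B_sym gsc by metis
lemma B_neg_r: "X\<in>g \<Longrightarrow> Z\<in>g \<Longrightarrow> B Z (- X) = - B Z X"
  using B_neg_l B_sym gneg by metis
lemma B_diff_r: "X\<in>g \<Longrightarrow> Y\<in>g \<Longrightarrow> Z\<in>g \<Longrightarrow> B Z (X - Y) = B Z X - B Z Y"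
  using B_diff_l B_sym gdiff by metis
lemma B_nonneg: "X\<in>g \<Longrightarrow> B X X \<ge> 0"
  using B_pos[of X] B_scale_l[of X X 0] by (cases "X = 0") auto
lemma B_inv': "X\<in>g \<Longrightarrow> Y\<in>g \<Longrightarrow> Z\<in>g \<Longrightarrow> B (lie_bracket Z X) Y = - B X (lie_bracket Z Y)"
  using B_inv[of X Y Z] by linarith

lemma skew_self: assumes "\<And>x y. x\<in>m \<Longrightarrow> y\<in>m \<Longrightarrow> B (P x) y = - B x (P y)"
    and "\<And>x. x\<in>m \<Longrightarrow> P x \<in> m" and "x\<in>m"
  shows "B (P x) x = 0"
  using assms B_sym[of "P x" x] gm by force

lemma tcomm: "Y\<in>t \<Longrightarrow> Y'\<in>t \<Longrightarrow> lie_bracket Y (lie_bracket Y' u) = lie_bracket Y' (lie_bracket Y u)"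
  using jacobi[of Y Y' u] t_ab by simp

definition inv_sub :: "(real^'n^'n) set \<Rightarrow> bool" where
  "inv_sub V \<longleftrightarrow> subspace V \<and> V \<subseteq> m \<and> V \<noteq> {0} \<and> (\<forall>x\<in>V. I x \<in> V) \<and> (\<forall>Y\<in>t. \<forall>x\<in>V. lie_bracket Y x \<in> V)"

lemma I0: "I 0 = 0" using Isc[of 0 0] m_sub subspace_0 by fastforce

lemma joint_eig: obtains x \<alpha> where "x \<in> m" "x \<noteq> 0" "\<And>Y. Y\<in>t \<Longrightarrow> lie_bracket Y x = \<alpha> Y *\<^sub>R I x"
proof -
  have "inv_sub m" unfolding inv_sub_def using m_sub m_nz Im t_m by auto
  then obtain V0 where V0: "inv_sub V0" and V0min: "\<And>W. inv_sub W \<Longrightarrow> dim V0 \<le> dim W"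
    using ex_has_least_nat[of inv_sub m dim] by blast
  have V0s: "subspace V0" and V0m: "V0 \<subseteq> m" and V0nz: "V0 \<noteq> {0}"
    and V0I: "\<And>x. x\<in>V0 \<Longrightarrow> I x \<in> V0" and V0t: "\<And>Y x. Y\<in>t \<Longrightarrow> x\<in>V0 \<Longrightarrow> lie_bracket Y x \<in> V0"
    using V0 unfolding inv_sub_def by auto
  have minV: "W = V0" if "inv_sub W" "W \<subseteq> V0" for W
    using subspace_dim_equal[of W V0] that V0s V0min[OF that(1)] unfolding inv_sub_def by auto
  have eigen_ext: "\<forall>x\<in>V0. lie_bracket Y x = c *\<^sub>R I x"
    if Y: "Y\<in>t" and u: "u\<in>V0" "u\<noteq>0" "lie_bracket Y u = c *\<^sub>R I u" for Y c u
  proof -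
    define E where "E = {u\<in>V0. lie_bracket Y u = c *\<^sub>R I u}"
    have "subspace E" unfolding subspace_def E_def
      using V0s V0m subspace_0 I0
      by (auto simp: subspace_add subspace_scale br_add_r br_scale_r Iadd Isc scaleR_add_right subset_iff)
    moreover have "E \<subseteq> m" "E \<noteq> {0}" using V0m u by (auto simp: E_def)
    moreover have "\<forall>x\<in>E. I x \<in> E"
      unfolding E_def using V0I V0m Y Icomm Isc Im by (auto simp: subset_iff)
    moreover have "\<forall>Y'\<in>t. \<forall>x\<in>E. lie_bracket Y' x \<in> E"
      unfolding E_def using V0t V0m Y Icomm tcomm by (auto simp: br_scale_r subset_iff)
    ultimately have "E = V0" using minV unfolding inv_sub_def E_def by auto
    thus ?thesis unfolding E_def by auto
  qed
  have sq_ext: "\<forall>x\<in>V0. lie_bracket Y (lie_bracket Y x) = l *\<^sub>R x"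
    if Y: "Y\<in>t" and u: "u\<in>V0" "u\<noteq>0" "lie_bracket Y (lie_bracket Y u) = l *\<^sub>R u" for Y l u
  proof -
    define E where "E = {u\<in>V0. lie_bracket Y (lie_bracket Y u) = l *\<^sub>R u}"
    have "subspace E" unfolding subspace_def E_def
      using V0s subspace_0
      by (auto simp: subspace_add subspace_scale br_add_r br_scale_r scaleR_add_right)
    moreover have "E \<subseteq> m" "E \<noteq> {0}" using V0m u by (auto simp: E_def)
    moreover have "\<forall>x\<in>E. I x \<in> E"
      unfolding E_def using V0I V0m Y Icomm Isc Im t_m by (auto simp: subset_iff)
    moreover have "\<forall>Y'\<in>t. \<forall>x\<in>E. lie_bracket Y' x \<in> E"
      unfolding E_def using V0t V0m Y tcomm by (auto simp: br_scale_r subset_iff)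
    ultimately have "E = V0" using minV unfolding inv_sub_def E_def by auto
    thus ?thesis unfolding E_def by auto
  qed
  have each: "\<exists>c. \<forall>x\<in>V0. lie_bracket Y x = c *\<^sub>R I x" if Y: "Y\<in>t" for Y
  proof -
    have Ysk: "transpose Y = - Y" using Y t_g g_skew by (auto simp: skew_matrices_def)
    have lin: "linear (\<lambda>u. lie_bracket Y (lie_bracket Y u))"
      using linear_compose[OF br_linear[of Y] br_linear[of Y]] by (simp add: o_def)
    have sym: "\<And>u w. lie_bracket Y (lie_bracket Y u) \<bullet> w = u \<bullet> lie_bracket Y (lie_bracket Y w)"
      using frob_skew[OF Ysk] by simp
    obtain v l where v: "v\<in>V0" "v\<noteq>0" and vl: "lie_bracket Y (lie_bracket Y v) = l *\<^sub>R v"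
      using sym_eigen[OF lin sym V0s V0nz] V0t[OF Y] by blast
    have sq: "\<forall>x\<in>V0. lie_bracket Y (lie_bracket Y x) = l *\<^sub>R x" using sq_ext[OF Y v vl] .
    have "l * (v \<bullet> v) = - (lie_bracket Y v \<bullet> lie_bracket Y v)"
      using frob_skew[OF Ysk, of "lie_bracket Y v" v] vl by simp
    moreover have "v \<bullet> v > 0" using v by simp
    ultimately have "l * (v \<bullet> v) \<le> 0" by simp
    hence l0: "l \<le> 0" using \<open>v \<bullet> v > 0\<close> by (simp add: mult_le_0_iff)
    define \<mu> where "\<mu> = sqrt (- l)"
    have mu2: "\<mu> * \<mu> = - l" using l0 by (simp add: \<mu>_def)
    have vm: "v \<in> m" using v V0m by auto
    define u where "u = lie_bracket Y v + \<mu> *\<^sub>R I v"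
    show ?thesis
    proof (cases "u = 0")
      case True
      hence "lie_bracket Y v = (-\<mu>) *\<^sub>R I v" unfolding u_def by (simp add: eq_neg_iff_add_eq_0)
      thus ?thesis using eigen_ext[OF Y v] by blast
    next
      case False
      have uV: "u \<in> V0" unfolding u_def using V0s V0t[OF Y v(1)] V0I[OF v(1)]
        by (simp add: subspace_add subspace_scale)
      have "lie_bracket Y u = \<mu> *\<^sub>R I u"
      proof -
        have Yv: "lie_bracket Y v \<in> m" using t_m[OF Y vm] .
        have "lie_bracket Y u = l *\<^sub>R v + \<mu> *\<^sub>R I (lie_bracket Y v)"
          unfolding u_def by (simp add: br_add_r br_scale_r vl Icomm[OF Y vm])
        moreover have "\<mu> *\<^sub>R I u = \<mu> *\<^sub>R I (lie_bracket Y v) + (\<mu> * \<mu>) *\<^sub>R I (I v)"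
        proof -
          have "\<mu> *\<^sub>R I v \<in> m" using Im[OF vm] m_sub by (simp add: subspace_scale)
          hence "I u = I (lie_bracket Y v) + \<mu> *\<^sub>R I (I v)"
            unfolding u_def using Yv Im[OF vm] by (simp add: Iadd Isc)
          thus ?thesis by (simp add: scaleR_add_right)
        qed
        ultimately show ?thesis using mu2 II[OF vm] by simp
      qed
      thus ?thesis using eigen_ext[OF Y uV False] by blast
    qed
  qed
  define \<alpha> where "\<alpha> Y = (SOME c. \<forall>x\<in>V0. lie_bracket Y x = c *\<^sub>R I x)" for Y
  obtain x where x: "x\<in>V0" "x\<noteq>0" using V0nz V0s subspace_0 by blast
  have "\<And>Y. Y\<in>t \<Longrightarrow> lie_bracket Y x = \<alpha> Y *\<^sub>R I x"
    using someI_ex[OF each] x unfolding \<alpha>_def by blast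
  thus ?thesis using that x V0m by blast
qed


end


context qs begin

lemma zero_t: assumes "D\<in>g" "\<And>Y. Y\<in>t \<Longrightarrow> lie_bracket Y D = 0" "\<And>Y. Y\<in>t \<Longrightarrow> B D Y = 0"
  shows "D = 0"
proof -
  have "D \<in> t" using t_max assms by blast
  hence "B D D = 0" using assms(3) by blast
  thus ?thesis using B_pos[OF assms(1)] by force
qed

lemma contra: False
proof -
  obtain x \<alpha> where xm: "x \<in> m" and x0: "x \<noteq> 0" and al: "\<And>Y. Y\<in>t \<Longrightarrow> lie_bracket Y x = \<alpha> Y *\<^sub>R I x"
    using joint_eig by blast
  define a where "a = I x"
  define b where "b = J x"
  define c where "c = K x"
  have am: "a\<in>m" and bm: "b\<in>m" and cm: "c\<in>m" using Im Jm Km xm by (auto simp: a_def b_def c_def)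
  have xg: "x\<in>g" and ag: "a\<in>g" and bg: "b\<in>g" and cg: "c\<in>g" using am bm cm xm gm by auto
  have Yx: "lie_bracket Y x = \<alpha> Y *\<^sub>R a" if "Y\<in>t" for Y using al[OF that] a_def by simp
  have Ya: "lie_bracket Y a = - (\<alpha> Y *\<^sub>R x)" if Y: "Y\<in>t" for Y
    unfolding a_def using Icomm[OF Y xm] al[OF Y] Isc[OF Im[OF xm]] II[OF xm] by simp
  have Yb: "lie_bracket Y b = - (\<alpha> Y *\<^sub>R c)" if Y: "Y\<in>t" for Y
    unfolding b_def c_def using Jcomm[OF Y xm] al[OF Y] Jsc[OF Im[OF xm]] JI[OF xm] by simp
  have Yc: "lie_bracket Y c = \<alpha> Y *\<^sub>R b" if Y: "Y\<in>t" for Y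
    unfolding b_def c_def using Kcomm[OF Y xm] al[OF Y] Ksc[OF Im[OF xm]] KI[OF xm] by simp
  define N where "N = B x x"
  have N: "N > 0" using B_pos[OF xg x0] N_def by simp
  have Baa: "B a a = N" unfolding a_def N_def
    using Iskew[OF xm Im[OF xm]] II[OF xm] B_neg_r[OF xg xg] by simp
  have Bbb: "B b b = N" unfolding b_def N_def
    using Jskew[OF xm Jm[OF xm]] JJ[OF xm] B_neg_r[OF xg xg] by simp
  have Bcx: "B c x = 0" unfolding c_def using skew_self[OF Kskew Km xm] .
  have Bbx: "B b x = 0" unfolding b_def using skew_self[OF Jskew Jm xm] .
  have Bba: "B b a = 0"
  proof -
    have "B b a = - B x (J a)" unfolding b_def using Jskew[OF xm am] .
    also have "J a = - c" unfolding a_def c_def using JI[OF xm] .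
    finally have "B b a = B x c" using B_neg_r[OF cg xg] by simp
    thus ?thesis using Bcx B_sym[OF cg xg] by simp
  qed
  have Bca: "B c a = 0"
  proof -
    have "B c a = - B x (K a)" unfolding c_def using Kskew[OF xm am] .
    also have "K a = b" unfolding a_def b_def using KI[OF xm] .
    finally show ?thesis using Bbx B_sym[OF bg xg] by simp
  qed
  define h0 where "h0 = lie_bracket x a"
  have h0g: "h0 \<in> g" unfolding h0_def using g_br xg ag by simp
  have h0t: "h0 \<in> t"
  proof (rule t_max[OF h0g])
    fix Y assume Y: "Y\<in>t"
    show "lie_bracket Y h0 = 0" unfolding h0_def
      using jacobi[of Y x a] Yx[OF Y] Ya[OF Y] by (simp add: br_scale_l br_neg_r br_scale_r)
  qed
  have Bh0: "B h0 Y = \<alpha> Y * N" if Y: "Y\<in>t" for Y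
  proof -
    have Yg: "Y \<in> g" using tg Y by simp
    have "B h0 Y = - B a (lie_bracket x Y)" unfolding h0_def using B_inv'[OF ag Yg xg] .
    also have "lie_bracket x Y = - (\<alpha> Y *\<^sub>R a)" using br_anti[of x Y] Yx[OF Y] by simp
    finally show ?thesis using B_neg_r[OF gsc[OF ag] ag] B_scale_r[OF ag ag] Baa by simp
  qed
  have h0nz: "h0 \<noteq> 0"
  proof
    assume "h0 = 0"
    have "\<alpha> Y = 0" if Y: "Y\<in>t" for Y
    proof -
      have "B (0 *\<^sub>R Y) Y = 0 * B Y Y" using tg[OF Y] by (intro B_scale_l) auto
      hence "\<alpha> Y * N = 0" using Bh0[OF Y] \<open>h0 = 0\<close> by simp
      thus ?thesis using N by simp
    qed
    hence "\<And>Y. Y\<in>t \<Longrightarrow> lie_bracket Y x = 0" using Yx by simp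
    hence "x \<in> t" using t_max[OF xg] by blast
    hence "N = 0" using m_perp[OF xm] N_def by simp
    thus False using N by simp
  qed
  have ah0: "\<alpha> h0 * N > 0" using Bh0[OF h0t] B_pos[OF h0g h0nz] by simp
  have xb: "lie_bracket x b \<in> g" and ac: "lie_bracket a c \<in> g" and xc: "lie_bracket x c \<in> g" and ab: "lie_bracket a b \<in> g"
    using g_br xg ag bg cg by auto
  have D1: "lie_bracket x b - lie_bracket a c = 0"
  proof (rule zero_t)
    show "lie_bracket x b - lie_bracket a c \<in> g" using gdiff xb ac by simp
  next
    fix Y assume Y: "Y\<in>t"
    show "lie_bracket Y (lie_bracket x b - lie_bracket a c) = 0"
      using jacobi[of Y x b] jacobi[of Y a c] Yx[OF Y] Ya[OF Y] Yb[OF Y] Yc[OF Y]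
      by (simp add: br_diff_r br_scale_l br_neg_r br_scale_r br_neg_l)
  next
    fix Y assume Y: "Y\<in>t"
    have Yg: "Y \<in> g" using tg Y by simp
    have 1: "B (lie_bracket x b) Y = 0"
      using B_inv'[OF bg Yg xg] br_anti[of x Y] Yx[OF Y] B_neg_r[OF gsc[OF ag] bg] B_scale_r[OF ag bg] Bba by simp
    have 2: "B (lie_bracket a c) Y = 0"
      using B_inv'[OF cg Yg ag] br_anti[of a Y] Ya[OF Y] B_scale_r[OF xg cg] Bcx by simp
    show "B (lie_bracket x b - lie_bracket a c) Y = 0" using B_diff_l[OF xb ac Yg] 1 2 by simp
  qed
  have D2: "lie_bracket x c + lie_bracket a b = 0"
  proof (rule zero_t)
    show "lie_bracket x c + lie_bracket a b \<in> g" using gadd xc ab by simp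
  next
    fix Y assume Y: "Y\<in>t"
    show "lie_bracket Y (lie_bracket x c + lie_bracket a b) = 0"
      using jacobi[of Y x c] jacobi[of Y a b] Yx[OF Y] Ya[OF Y] Yb[OF Y] Yc[OF Y]
      by (simp add: br_add_r br_scale_l br_neg_r br_scale_r br_neg_l)
  next
    fix Y assume Y: "Y\<in>t"
    have Yg: "Y \<in> g" using tg Y by simp
    have 1: "B (lie_bracket x c) Y = 0"
      using B_inv'[OF cg Yg xg] br_anti[of x Y] Yx[OF Y] B_neg_r[OF gsc[OF ag] cg] B_scale_r[OF ag cg] Bca by simp
    have 2: "B (lie_bracket a b) Y = 0"
      using B_inv'[OF bg Yg ag] br_anti[of a Y] Ya[OF Y] B_scale_r[OF xg bg] Bbx by simp
    show "B (lie_bracket x c + lie_bracket a b) Y = 0" using B_add_l[OF xc ab Yg] 1 2 by simp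
  qed
  define P where "P = lie_bracket x b"
  define Q where "Q = lie_bracket a b"
  have acP: "lie_bracket a c = P" using D1 P_def by simp
  have xcQ: "lie_bracket x c = - Q" using D2 Q_def by (simp add: eq_neg_iff_add_eq_0)
  have Pg: "P \<in> g" and Qg: "Q \<in> g" using xb ab P_def Q_def by auto
  have axc: "lie_bracket a (lie_bracket x c) \<in> g" and xac: "lie_bracket x (lie_bracket a c) \<in> g"
    using g_br ag xg xc ac by auto
  have BPP: "B P P = - B b (lie_bracket x (lie_bracket a c))"
    using B_inv'[OF bg ac xg] acP P_def by simp
  have BQQ: "B Q Q = B b (lie_bracket a (lie_bracket x c))"
  proof -
    have "B Q Q = - B Q (lie_bracket x c)" using xcQ B_neg_r[OF Qg Qg] by simp
    also have "B Q (lie_bracket x c) = - B b (lie_bracket a (lie_bracket x c))"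
      unfolding Q_def using B_inv'[OF bg xc ag] .
    finally show ?thesis by simp
  qed
  have jac: "lie_bracket x (lie_bracket a c) = \<alpha> h0 *\<^sub>R b + lie_bracket a (lie_bracket x c)"
    using jacobi[of x a c] Yc[OF h0t] h0_def by simp
  have "B P P + B Q Q = - (\<alpha> h0 * N)"
  proof -
    have "B b (lie_bracket x (lie_bracket a c)) = \<alpha> h0 * N + B b (lie_bracket a (lie_bracket x c))"
      using jac B_add_r[OF gsc[OF bg] axc bg] B_scale_r[OF bg bg] Bbb by simp
    thus ?thesis using BPP BQQ by simp
  qed
  moreover have "B P P \<ge> 0" "B Q Q \<ge> 0" using B_nonneg Pg Qg by auto
  ultimately show False using ah0 by linarith
qed

end



definition E1 :: "real^3^3" where
  "E1 = (\<chi> i j. if i = 3 \<and> j = 2 then 1 else if i = 2 \<and> j = 3 then -1 else 0)"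
definition E2 :: "real^3^3" where
  "E2 = (\<chi> i j. if i = 1 \<and> j = 3 then 1 else if i = 3 \<and> j = 1 then -1 else 0)"
definition E3 :: "real^3^3" where
  "E3 = (\<chi> i j. if i = 2 \<and> j = 1 then 1 else if i = 1 \<and> j = 2 then -1 else 0)"

lemma E_so3: "E1 \<in> so3" "E2 \<in> so3" "E3 \<in> so3"
  unfolding skew_matrices_def E1_def E2_def E3_def
  by (auto simp: vec_eq_iff transpose_def forall_3)

lemma E_axial: "axial E1 $ 1 = 1" "axial E1 $ 2 = 0" "axial E1 $ 3 = 0"
  "axial E2 $ 1 = 0" "axial E2 $ 2 = 1" "axial E2 $ 3 = 0"
  "axial E3 $ 1 = 0" "axial E3 $ 2 = 0" "axial E3 $ 3 = 1"
  unfolding axial_def E1_def E2_def E3_def by simp_all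

theorem lemma3p2:
  fixes g h :: "(real^'n^'n) set"
    and B :: "real^'n^'n \<Rightarrow> real^'n^'n \<Rightarrow> real"
    and rho :: "real^'n^'n \<Rightarrow> real^3^3"
    and phi :: "real^3^3 \<Rightarrow> real^'n^'n \<Rightarrow> real^'n^'n"
  assumes "compact_lie_algebra g"
    and "lie_subalgebra h" and "h \<subseteq> g"
    and "ad_invariant_scalar_product g B"
    and "orth_compl g h B \<noteq> {0}"
    and "lie_rank h = lie_rank g"
    and "faithful_isotropy h (orth_compl g h B)"
    and "lie_hom_into_so3 h rho"
    and "lie_hom_so3_skew_endo (orth_compl g h B) B phi"
    and "equivariant_inf h (orth_compl g h B) rho phi"
    and "extends_to_Cl03_rep (orth_compl g h B) phi"
  shows "\<exists>Y\<in>h. rho Y \<noteq> 0"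
proof (rule ccontr)
  assume "\<not> (\<exists>Y\<in>h. rho Y \<noteq> 0)"
  hence rho0: "\<And>Y. Y\<in>h \<Longrightarrow> rho Y = 0" by blast
  define m where "m = orth_compl g h B"
  have g_sub: "subspace g" and g_br: "\<And>X Y. X\<in>g \<Longrightarrow> Y\<in>g \<Longrightarrow> lie_bracket X Y \<in> g"
    and g_skew: "g \<subseteq> skew_matrices"
    using assms(1) unfolding compact_lie_algebra_def lie_subalgebra_def by auto
  have h_sub: "subspace h" and h_br: "\<And>X Y. X\<in>h \<Longrightarrow> Y\<in>h \<Longrightarrow> lie_bracket X Y \<in> h"
    using assms(2) unfolding lie_subalgebra_def by auto
  have B_sym: "\<And>X Y. X\<in>g \<Longrightarrow> Y\<in>g \<Longrightarrow> B X Y = B Y X"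
    and B_lin: "\<And>X Y Z a b. X\<in>g \<Longrightarrow> Y\<in>g \<Longrightarrow> Z\<in>g \<Longrightarrow> B (a *\<^sub>R X + b *\<^sub>R Y) Z = a * B X Z + b * B Y Z"
    and B_pos: "\<And>X. X\<in>g \<Longrightarrow> X\<noteq>0 \<Longrightarrow> B X X > 0"
    and B_inv: "\<And>X Y Z. X\<in>g \<Longrightarrow> Y\<in>g \<Longrightarrow> Z\<in>g \<Longrightarrow> B (lie_bracket Z X) Y + B X (lie_bracket Z Y) = 0"
    using assms(4) unfolding ad_invariant_scalar_product_def by auto
  define R where "R L = {dim A | A. subspace A \<and> A \<subseteq> L \<and> (\<forall>X\<in>A. \<forall>Y\<in>A. lie_bracket X Y = 0)}"
    for L :: "(real^'n^'n) set"
  have finR: "finite (R L)" for L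
  proof -
    have d: "\<And>A :: (real^'n^'n) set. dim A \<le> DIM(real^'n^'n)" by (rule dim_subset_UNIV)
    have "R L \<subseteq> {..DIM(real^'n^'n)}" unfolding R_def using d by (auto simp del: DIM_cart)
    thus ?thesis using finite_subset by blast
  qed
  have rk: "lie_rank L = Max (R L)" for L unfolding lie_rank_def R_def by simp
  have "R h \<noteq> {}" unfolding R_def using subspace_0[OF h_sub] by (auto intro!: exI[of _ "{0}"] simp: subspace_def)
  hence "lie_rank h \<in> R h" using Max_in[OF finR] rk by simp
  then obtain t where t_sub: "subspace t" and t_h: "t \<subseteq> h"
    and t_ab: "\<And>X Y. X\<in>t \<Longrightarrow> Y\<in>t \<Longrightarrow> lie_bracket X Y = 0" and dimt: "dim t = lie_rank h"
    unfolding R_def by auto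
  have t_g: "t \<subseteq> g" using t_h assms(3) by auto
  have t_max: "X\<in>t" if X: "X\<in>g" and cX: "\<And>Y. Y\<in>t \<Longrightarrow> lie_bracket Y X = 0" for X
  proof (rule ccontr)
    assume Xt: "X \<notin> t"
    define A where "A = span (insert X t)"
    have "subspace A" unfolding A_def by simp
    moreover have "A \<subseteq> g" unfolding A_def using X t_g g_sub by (intro span_minimal) auto
    moreover have "\<forall>U\<in>A. \<forall>W\<in>A. lie_bracket U W = 0"
    proof (intro ballI)
      fix U W assume "U \<in> A" "W \<in> A"
      then obtain k k' where k: "U - k *\<^sub>R X \<in> t" and k': "W - k' *\<^sub>R X \<in> t"
        unfolding A_def span_insert using span_eq_iff[THEN iffD2, OF t_sub] by auto
      define y where "y = U - k *\<^sub>R X"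
      define z where "z = W - k' *\<^sub>R X"
      have U: "U = k *\<^sub>R X + y" and W: "W = k' *\<^sub>R X + z" by (simp_all add: y_def z_def)
      have "lie_bracket y X = 0" using cX k y_def by simp
      moreover have "lie_bracket X z = 0" using cX k' z_def br_anti[of X z] by simp
      moreover have "lie_bracket y z = 0" using t_ab k k' y_def z_def by simp
      ultimately show "lie_bracket U W = 0" unfolding U W
        by (simp add: br_add_l br_add_r br_scale_l br_scale_r)
    qed
    ultimately have "dim A \<in> R g" unfolding R_def by blast
    hence "dim A \<le> lie_rank g" using Max_ge[OF finR] rk by simp
    moreover have "dim A = dim t + 1" proof -
      have "X \<notin> span t" using Xt t_sub by (metis span_eq_iff)
      thus ?thesis unfolding A_def by (simp add: dim_insert)
    qed
    ultimately show False using dimt assms(6) by simp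
  qed
  have m_g: "m \<subseteq> g" unfolding m_def orth_compl_def by auto
  have mem: "x \<in> m \<longleftrightarrow> x \<in> g \<and> (\<forall>Y\<in>h. B x Y = 0)" for x unfolding m_def orth_compl_def by simp
  have hg: "Y\<in>h \<Longrightarrow> Y\<in>g" for Y using assms(3) by auto
  have m0: "0 \<in> m"
  proof -
    have "B 0 Y = 0" if "Y\<in>h" for Y using B_lin[OF hg hg hg, OF that that that, of 0 0] by simp
    thus ?thesis using g_sub subspace_0 mem by blast
  qed
  have madd: "x + y \<in> m" if "x\<in>m" "y\<in>m" for x y
  proof -
    have "B (x + y) Y = 0" if "Y\<in>h" for Y
      using B_lin[of x y Y 1 1] \<open>x\<in>m\<close> \<open>y\<in>m\<close> hg[OF that] that mem by simp
    thus ?thesis using g_sub that mem by (simp add: subspace_add)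
  qed
  have msc: "c *\<^sub>R x \<in> m" if "x\<in>m" for x c
  proof -
    have "B (c *\<^sub>R x) Y = 0" if "Y\<in>h" for Y
      using B_lin[of x x Y c 0] \<open>x\<in>m\<close> hg[OF that] that mem by simp
    thus ?thesis using g_sub that mem by (simp add: subspace_scale)
  qed
  have m_sub: "subspace m" unfolding subspace_def using m0 madd msc by blast
  have m_perp: "\<And>X Y. X\<in>m \<Longrightarrow> Y\<in>t \<Longrightarrow> B X Y = 0" using t_h unfolding m_def orth_compl_def by auto
  have h_m: "lie_bracket Y X \<in> m" if Y: "Y\<in>h" and X: "X\<in>m" for Y X
  proof -
    have Yg: "Y\<in>g" and Xg: "X\<in>g" using Y X assms(3) m_g by auto
    have "B (lie_bracket Y X) Z = 0" if Z: "Z\<in>h" for Z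
    proof -
      have Zg: "Z\<in>g" using Z assms(3) by auto
      have "B X (lie_bracket Y Z) = 0" using X h_br[OF Y Z] unfolding m_def orth_compl_def by auto
      thus ?thesis using B_inv[OF Xg Zg Yg] by simp
    qed
    thus ?thesis using g_br[OF Yg Xg] unfolding m_def orth_compl_def by auto
  qed
  obtain I J K where I: "endo_on m I" and J: "endo_on m J" and K: "endo_on m K"
    and quat: "\<forall>x\<in>m. I (I x) = - x \<and> J (J x) = - x \<and> K (K x) = - x \<and> I (J (K x)) = - x"
    and phiIJK: "\<forall>X\<in>so3. \<forall>x\<in>m. phi X x =
            (1/2) *\<^sub>R ((axial X $ 1) *\<^sub>R I x + (axial X $ 2) *\<^sub>R J x + (axial X $ 3) *\<^sub>R K x)"
    using assms(11) unfolding extends_to_Cl03_rep_def m_def by blast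
  have Im: "\<And>x. x\<in>m \<Longrightarrow> I x \<in> m" and Jm: "\<And>x. x\<in>m \<Longrightarrow> J x \<in> m" and Km: "\<And>x. x\<in>m \<Longrightarrow> K x \<in> m"
    using I J K by (auto simp: endo_on_def)
  have p1: "phi E1 x = (1/2) *\<^sub>R I x" and p2: "phi E2 x = (1/2) *\<^sub>R J x" and p3: "phi E3 x = (1/2) *\<^sub>R K x"
    if "x\<in>m" for x
    using phiIJK E_so3 E_axial that by simp_all
  have pskew: "\<And>X x y. X\<in>so3 \<Longrightarrow> x\<in>m \<Longrightarrow> y\<in>m \<Longrightarrow> B (phi X x) y = - B x (phi X y)"
    and plin: "\<And>X Y a b x. X\<in>so3 \<Longrightarrow> Y\<in>so3 \<Longrightarrow> x\<in>m \<Longrightarrow> phi (a *\<^sub>R X + b *\<^sub>R Y) x = a *\<^sub>R phi X x + b *\<^sub>R phi Y x"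
    using assms(9) unfolding lie_hom_so3_skew_endo_def skew_endo_on_def m_def by auto
  have p0: "phi 0 x = 0" if "x\<in>m" for x using plin[OF E_so3(1) E_so3(1) that, of 0 0] by simp
  have equi: "\<And>Y X x. Y\<in>h \<Longrightarrow> X\<in>so3 \<Longrightarrow> x\<in>m \<Longrightarrow>
      phi (lie_bracket (rho Y) X) x = lie_bracket Y (phi X x) - phi X (lie_bracket Y x)"
    using assms(10) unfolding equivariant_inf_def m_def by auto
  have comm: "lie_bracket Y (phi X x) = phi X (lie_bracket Y x)" if "Y\<in>h" "X\<in>so3" "x\<in>m" for Y X x
    using equi[OF that] rho0[OF that(1)] p0[OF that(3)] by simp
  have skewP: "B (P x) y = - B x (P y)"
    if P: "\<And>x. x\<in>m \<Longrightarrow> phi E x = (1/2) *\<^sub>R P x" "\<And>x. x\<in>m \<Longrightarrow> P x \<in> m" and E: "E\<in>so3"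
      and xy: "x\<in>m" "y\<in>m" for P E x y
  proof -
    have xg: "x\<in>g" "y\<in>g" "P x \<in> g" "P y \<in> g" using xy P(2) m_g by auto
    have "B ((1/2) *\<^sub>R P x) y = - B x ((1/2) *\<^sub>R P y)" using pskew[OF E xy] P(1) xy by simp
    moreover have "B ((1/2) *\<^sub>R P x) y = (1/2) * B (P x) y" using B_lin[OF xg(3) xg(3) xg(2), of "1/2" 0] by simp
    moreover have "B x ((1/2) *\<^sub>R P y) = (1/2) * B x (P y)"
    proof -
      have "(1/2) *\<^sub>R P y \<in> g" using xg(4) g_sub by (simp add: subspace_scale)
      hence "B x ((1/2) *\<^sub>R P y) = B ((1/2) *\<^sub>R P y) x" using B_sym xg by simp
      also have "... = (1/2) * B (P y) x" using B_lin[OF xg(4) xg(4) xg(1), of "1/2" 0] by simp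
      also have "... = (1/2) * B x (P y)" using B_sym xg by simp
      finally show ?thesis .
    qed
    ultimately show ?thesis by simp
  qed
  have commP: "lie_bracket Y (P x) = P (lie_bracket Y x)"
    if P: "\<And>x. x\<in>m \<Longrightarrow> phi E x = (1/2) *\<^sub>R P x" and E: "E\<in>so3" and Y: "Y\<in>h" and x: "x\<in>m" for P E Y x
  proof -
    have "lie_bracket Y ((1/2) *\<^sub>R P x) = (1/2) *\<^sub>R P (lie_bracket Y x)"
      using comm[OF Y E x] P[OF x] P[OF h_m[OF Y x]] by simp
    thus ?thesis by (simp add: br_scale_r)
  qed
  have q: "qs g t m B I J K"
    apply (rule qs.intro)
    subgoal by (rule g_sub)
    subgoal by (rule g_br)
    subgoal by (rule g_skew)
    subgoal by (rule B_sym)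
    subgoal by (rule B_lin)
    subgoal by (rule B_pos)
    subgoal by (rule B_inv)
    subgoal by (rule t_sub)
    subgoal by (rule t_g)
    subgoal by (rule t_ab)
    subgoal by (rule t_max)
    subgoal by (rule m_sub)
    subgoal by (rule m_g)
    subgoal using assms(5) by (simp add: m_def)
    subgoal by (rule m_perp)
    subgoal for Y X using h_m t_h by blast
    subgoal by (rule I)
    subgoal by (rule J)
    subgoal by (rule K)
    subgoal for x using quat by blast
    subgoal for x y by (rule skewP[OF p1 Im E_so3(1)])
    subgoal for x y by (rule skewP[OF p2 Jm E_so3(2)])
    subgoal for x y by (rule skewP[OF p3 Km E_so3(3)])
    subgoal for Y x using commP[OF p1 E_so3(1)] t_h by blast
    subgoal for Y x using commP[OF p2 E_so3(2)] t_h by blast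
    subgoal for Y x using commP[OF p3 E_so3(3)] t_h by blast
    done
  show False by (rule qs.contra[OF q])
qed


end
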